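(* Let $\mathbf a,\mathbf c,d_1,d_2,\sigma,f$ satisfy the hypotheses: $\mathbf a=\{a_1,\dots,a_A\}$, $\mathbf c=\{c_1,\dots,c_C\}$ ($A,C$ not both zero), $d_1,d_2\in\mathbb C\setminus\{0\}$, $\sigma>0$, $f\in\mathbb C\setminus\{0\}$, $|c_k|<\sigma$, $|d_1|,|d_2|<1/\sigma$, $c_kd_l\notin\Omega_q$, $d_2/d_1\notin\{q^m:m\in\mathbb Z\}$, $f,fd_1/d_2\notin\{q^m:m\in\mathbb Z\}$; let $s\in\mathbb C\setminus\{0\}$ and fix square roots as $\sqrt{d_2/d_1}:=1/\sqrt{d_1/d_2}$, $\sqrt{d_1d_2}:=d_1\sqrt{d_2/d_1}$; $z=e^{i\psi}$. Then $$\int_{-\pi}^{\pi}\frac{\big((fd_1,\tfrac qfd_2)\tfrac\sigma z,(\tfrac f{d_2},\tfrac q{fd_1},\mathbf a)\tfrac z\sigma;q\big)_\infty}{\big((d_1,d_2)\tfrac\sigma z,\mathbf c\tfrac z\sigma;q\big)_\infty}d\psi=\frac{2\pi\sqrt{d_2/d_1}\,\vartheta(f,fd_1/d_2;q)}{(1-q)s(q;q)_\infty^2\vartheta(d_2/d_1;q)}\int_{s\sqrt{d_2/d_1}}^{s\sqrt{d_1/d_2}}\frac{\big((q\sqrt{d_1/d_2},q\sqrt{d_2/d_1},\mathbf a\sqrt{d_1d_2})\tfrac us;q\big)_\infty}{\big(\mathbf c\sqrt{d_1d_2}\tfrac us;q\big)_\infty}d_qu.$$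
   Context: $q\in\mathbb C$, $0<|q|<1$; $(a;q)_\infty=\prod_{j\ge0}(1-aq^j)$, $(a_1,\dots,a_k;q)_\infty=\prod_i(a_i;q)_\infty$; a list as entry stands for all its elements, $(\mathbf u y;q)_\infty=\prod_i(u_iy;q)_\infty$. $\Omega_q=\{q^{-k}:k\in\mathbb N_0\}$. $\vartheta(x;q)=(x,q/x;q)_\infty$, $\vartheta(x,y;q)=\vartheta(x;q)\vartheta(y;q)$. Jackson $q$-integral: $\int_\alpha^\beta g(u)\,d_qu=(1-q)\beta\sum_{n\ge0}q^ng(q^n\beta)-(1-q)\alpha\sum_{n\ge0}q^ng(q^n\alpha)$. *)

theory Defs
  imports "HOL-Analysis.Analysis"
begin

definition qpoch :: "complex \<Rightarrow> complex \<Rightarrow> complex" where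
  "qpoch a q = (\<Prod>j. 1 - a * q ^ j)"

definition qpoch_list :: "complex list \<Rightarrow> complex \<Rightarrow> complex \<Rightarrow> complex" where
  "qpoch_list us y q = (\<Prod>u\<leftarrow>us. qpoch (u * y) q)"

definition qtheta :: "complex \<Rightarrow> complex \<Rightarrow> complex" where
  "qtheta x q = qpoch x q * qpoch (q / x) q"

definition Omega_q :: "complex \<Rightarrow> complex set" where
  "Omega_q q = {inverse (q ^ k) | k. True}"

definition qpowers :: "complex \<Rightarrow> complex set" where
  "qpowers q = {q powi m | m. True}"

definition jackson_int :: "(complex \<Rightarrow> complex) \<Rightarrow> complex \<Rightarrow> complex \<Rightarrow> complex \<Rightarrow> complex" where
  "jackson_int g \<alpha> \<beta> q =
     (1 - q) * \<beta> * (\<Sum>n. q ^ n * g (q ^ n * \<beta>))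
   - (1 - q) * \<alpha> * (\<Sum>n. q ^ n * g (q ^ n * \<alpha>))"

end

theory Submission
  imports Defs "HOL-Complex_Analysis.Complex_Analysis"
begin

lemma qpoch_abs_conv:
  fixes x q :: complex
  assumes q: "norm q < 1"
  shows "abs_convergent_prod (\<lambda>j. 1 - x * q ^ j)"
proof -
  have "summable (\<lambda>j. norm x * norm q ^ j)"
    using q by (intro summable_mult summable_geometric) auto
  moreover have "(\<lambda>i. norm ((1 - x*q^i) - 1)) = (\<lambda>j. norm x * norm q ^ j)"
    by (simp add: norm_mult norm_power)
  ultimately show ?thesis
    unfolding abs_convergent_prod_conv_summable by simp
qed

lemma qpoch_has_prod:
  assumes q: "norm q < 1"
  shows "(\<lambda>j. 1 - x * q ^ j) has_prod qpoch x q"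
proof -
  have "convergent_prod (\<lambda>j. 1 - x * q ^ j)"
    by (rule abs_convergent_prod_imp_convergent_prod[OF qpoch_abs_conv[OF q]])
  then show ?thesis unfolding qpoch_def by (rule convergent_prod_has_prod)
qed

lemma qpoch_rec:
  assumes q: "norm q < 1"
  shows "qpoch x q = (1 - x) * qpoch (q * x) q"
proof -
  have e: "(\<lambda>j. 1 - (q*x) * q ^ j) = (\<lambda>j. 1 - x * q ^ Suc j)"
    by (simp add: algebra_simps)
  have "(\<lambda>j. 1 - x * q ^ Suc j) has_prod qpoch (q*x) q"
    using qpoch_has_prod[OF q, of "q*x"] unfolding e .
  then have "(\<lambda>j. 1 - x * q ^ j) has_prod (qpoch (q*x) q * (1 - x))"
    using has_prod_Suc_imp[of "\<lambda>j. 1 - x * q ^ j" "qpoch (q*x) q"] by simp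
  then have "qpoch x q = qpoch (q*x) q * (1 - x)"
    by (rule has_prod_unique2[OF qpoch_has_prod[OF q]])
  then show ?thesis by (simp only: mult.commute)
qed

lemma qpoch_eq_0_iff:
  assumes q: "norm q < 1"
  shows "qpoch x q = 0 \<longleftrightarrow> (\<exists>j. x * q ^ j = 1)"
proof -
  have "qpoch x q = 0 \<longleftrightarrow> 0 \<in> range (\<lambda>j. 1 - x * q ^ j)"
    by (rule has_prod_eq_0_iff[OF qpoch_has_prod[OF q]])
  also have "\<dots> \<longleftrightarrow> (\<exists>j. x * q ^ j = 1)"
  proof
    assume "0 \<in> range (\<lambda>j. 1 - x * q ^ j)"
    then obtain j where "0 = 1 - x * q ^ j" by (rule rangeE)
    then have "x * q ^ j = 1" by (simp add: right_minus_eq)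
    then show "\<exists>j. x * q ^ j = 1" ..
  next
    assume "\<exists>j. x * q ^ j = 1"
    then obtain j where "x * q ^ j = 1" ..
    then have "0 = 1 - x * q ^ j" by simp
    then show "0 \<in> range (\<lambda>j. 1 - x * q ^ j)" by (rule range_eqI)
  qed
  finally show ?thesis .
qed

lemma qpoch_holo_UNIV:
  assumes q: "norm q < 1"
  shows "(\<lambda>x. qpoch x q) holomorphic_on UNIV"
proof (rule holomorphic_uniform_sequence[where f = "\<lambda>N x. \<Prod>n<N. 1 - x * q ^ n"])
  fix z :: complex
  define R where "R = norm z + 1"
  have R: "R > 0" by (simp add: R_def add_nonneg_pos)
  have uc: "uniformly_convergent_on (cball 0 R) (\<lambda>N x. \<Prod>n<N. 1 - x * q ^ n)"
  proof (rule uniformly_convergent_on_prod')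
    show "uniformly_convergent_on (cball 0 R) (\<lambda>N x. \<Sum>n<N. norm (1 - x * q ^ n - 1))"
    proof (rule Weierstrass_m_test')
      fix n and x :: complex assume "x \<in> cball 0 R"
      then show "norm (norm (1 - x * q ^ n - 1)) \<le> R * norm q ^ n"
        by (auto simp: norm_mult norm_power intro!: mult_right_mono)
    next
      show "summable (\<lambda>n. R * norm q ^ n)" using q by (intro summable_mult summable_geometric) auto
    qed
  qed (auto intro!: continuous_intros)
  have "\<exists>g. uniform_limit (cball 0 R) (\<lambda>N x. \<Prod>n<N. 1 - x * q ^ n) g sequentially"
    using uc by (simp only: uniformly_convergent_on_def)
  then obtain g where g: "uniform_limit (cball 0 R) (\<lambda>N x. \<Prod>n<N. 1 - x * q ^ n) g sequentially"
    by (rule exE)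
  have "uniform_limit (cball 0 R) (\<lambda>N x. \<Prod>n<N. 1 - x * q ^ n) (\<lambda>x. qpoch x q) sequentially"
  proof (rule uniform_limit_cong'[THEN iffD1, OF _ _ g])
    show "\<And>y x. x \<in> cball 0 R \<Longrightarrow> (\<Prod>n<y. 1 - x * q ^ n) = (\<Prod>n<y. 1 - x * q ^ n)" by simp
  next
    fix x :: complex assume "x \<in> cball 0 R"
    have "(\<lambda>n. \<Prod>i<n. 1 - x * q ^ i) \<longlonglongrightarrow> g x"
      by (rule tendsto_uniform_limitI[OF g]) fact
    then have "(\<lambda>n. \<Prod>i<Suc n. 1 - x * q ^ i) \<longlonglongrightarrow> g x"
      by (rule LIMSEQ_Suc)
    moreover have "(\<lambda>n. \<Prod>i<Suc n. 1 - x * q ^ i) \<longlonglongrightarrow> qpoch x q"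
      using convergent_prod_LIMSEQ[OF abs_convergent_prod_imp_convergent_prod[OF qpoch_abs_conv[OF q, of x]]]
      unfolding lessThan_Suc_atMost qpoch_def .
    ultimately show "g x = qpoch x q" by (rule LIMSEQ_unique)
  qed
  hence "uniform_limit (cball z 1) (\<lambda>N x. \<Prod>n<N. 1 - x * q ^ n) (\<lambda>x. qpoch x q) sequentially"
    by (rule uniform_limit_on_subset) (simp add: cball_subset_cball_iff R_def)
  thus "\<exists>d>0. cball z d \<subseteq> UNIV \<and> uniform_limit (cball z d) (\<lambda>N x. \<Prod>n<N. 1 - x * q ^ n) (\<lambda>x. qpoch x q) sequentially"
    by (intro exI[of _ 1]) auto
qed (auto intro!: holomorphic_intros)

lemma qpoch_holo [holomorphic_intros]:
  assumes q: "norm q < 1" and g: "g holomorphic_on S"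
  shows "(\<lambda>x. qpoch (g x) q) holomorphic_on S"
  using holomorphic_on_compose[OF g holomorphic_on_subset[OF qpoch_holo_UNIV[OF q]]]
  by (simp add: o_def)

lemma qpoch_list_holo [holomorphic_intros]:
  assumes q: "norm q < 1" and g: "g holomorphic_on S"
  shows "(\<lambda>x. qpoch_list us (g x) q) holomorphic_on S"
  unfolding qpoch_list_def
  by (induction us) (auto intro!: holomorphic_intros q g)

lemma qpoch_list_eq_0_iff:
  assumes q: "norm q < 1"
  shows "qpoch_list us y q = 0 \<longleftrightarrow> (\<exists>u\<in>set us. \<exists>j. u * y * q ^ j = 1)"
  unfolding qpoch_list_def
  by (induction us) (auto simp: qpoch_eq_0_iff[OF q])


lemma qtheta_mult_q:
  assumes q: "norm q < 1" "q \<noteq> 0" and x: "x \<noteq> 0"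
  shows "qtheta (q * x) q = - (1 / x) * qtheta x q"
proof -
  have e1: "qpoch x q = (1 - x) * qpoch (q * x) q" by (rule qpoch_rec[OF q(1)])
  have e2: "qpoch (1 / x) q = (1 - 1 / x) * qpoch (q / x) q"
    using qpoch_rec[OF q(1), of "1/x"] by simp
  have e3: "q / (q * x) = 1 / x" using q(2) by simp
  have A: "qtheta (q * x) q = qpoch (q * x) q * qpoch (1 / x) q" by (simp add: qtheta_def e3)
  have B: "qtheta x q = (1 - x) * qpoch (q * x) q * qpoch (q / x) q"
    by (simp add: qtheta_def e1)
  have C: "1 - 1 / x = - (1 / x) * (1 - x)" using x by (simp add: field_simps)
  show ?thesis unfolding A B e2 C using x by (simp add: field_simps)
qed

lemma qtheta_div_q:
  assumes q: "norm q < 1" "q \<noteq> 0" and x: "x \<noteq> 0"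
  shows "qtheta (x / q) q = - (x / q) * qtheta x q"
proof -
  have "qtheta (q * (x / q)) q = - (1 / (x / q)) * qtheta (x / q) q"
    by (rule qtheta_mult_q) (use q x in auto)
  then have "qtheta x q = - (q / x) * qtheta (x / q) q" using q(2) by simp
  then show ?thesis using q(2) x by (simp add: field_simps)
qed

lemma qtheta_inverse:
  assumes q: "norm q < 1" "q \<noteq> 0" and x: "x \<noteq> 0"
  shows "qtheta (1 / x) q = - (1 / x) * qtheta x q"
proof -
  have "qtheta (1 / x) q = qtheta (q * x) q"
    unfolding qtheta_def using q(2) x by (simp add: mult.commute)
  then show ?thesis using qtheta_mult_q[OF q x] by simp
qed

lemma qtheta_eq_0_imp:
  assumes q: "norm q < 1" "q \<noteq> 0" and "qtheta x q = 0"
  shows "\<exists>m::int. x = q powi m"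
proof -
  from assms(3) have "qpoch x q = 0 \<or> qpoch (q / x) q = 0" unfolding qtheta_def by simp
  then show ?thesis
  proof
    assume "qpoch x q = 0"
    then obtain j where j: "x * q ^ j = 1" using qpoch_eq_0_iff[OF q(1)] by blast
    then have "x = q powi (- int j)"
      using q(2) by (simp add: power_int_minus field_simps)
    then show ?thesis by blast
  next
    assume "qpoch (q / x) q = 0"
    then obtain j where j: "q / x * q ^ j = 1" using qpoch_eq_0_iff[OF q(1)] by blast
    then have "x \<noteq> 0" by auto
    with j have "x = q ^ Suc j" by (simp add: field_simps)
    then have "x = q powi (int (Suc j))" by (simp only: power_int_of_nat)
    then show ?thesis by blast
  qed
qed

lemma qtheta_nz:
  assumes q: "norm q < 1" "q \<noteq> 0" and "x \<notin> qpowers q"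
  shows "qtheta x q \<noteq> 0"
  using qtheta_eq_0_imp[OF q] assms(3) unfolding qpowers_def by blast


lemma ci_decomp:
  fixes \<phi> :: "complex \<Rightarrow> complex" and p :: "'i \<Rightarrow> complex"
  assumes g: "valid_path g" and U: "open U" and I: "finite I"
    and pi: "path_image g \<subseteq> U - p ` I"
    and holo: "\<phi> holomorphic_on (U - p ` I)"
    and eq: "\<And>w. w \<in> path_image g \<Longrightarrow> G w = \<phi> w - (\<Sum>i\<in>I. c i * (1 / (w - p i)))"
  shows "contour_integral g G = contour_integral g \<phi> - (\<Sum>i\<in>I. c i * contour_integral g (\<lambda>w. 1 / (w - p i)))"
proof -
  have op: "open (U - p ` I)" using U I by (intro open_Diff finite_imp_closed) auto
  have h1: "(\<phi> has_contour_integral contour_integral g \<phi>) g"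
    by (rule has_contour_integral_integral, rule contour_integrable_holomorphic_simple[OF holo op g pi])
  have h2: "((\<lambda>w. 1 / (w - p i)) has_contour_integral contour_integral g (\<lambda>w. 1 / (w - p i))) g"
    if "i \<in> I" for i
  proof (rule has_contour_integral_integral, rule contour_integrable_holomorphic_simple[of _ "- {p i}"])
    show "(\<lambda>w. 1 / (w - p i)) holomorphic_on - {p i}" by (intro holomorphic_intros) auto
    show "path_image g \<subseteq> - {p i}" using pi that by auto
  qed (use g in auto)
  have h3: "((\<lambda>w. \<Sum>i\<in>I. c i * (1 / (w - p i))) has_contour_integral (\<Sum>i\<in>I. c i * contour_integral g (\<lambda>w. 1 / (w - p i)))) g"
    by (rule has_contour_integral_sum[OF I]) (rule has_contour_integral_lmul, rule h2)
  have "contour_integral g G = contour_integral g (\<lambda>w. \<phi> w - (\<Sum>i\<in>I. c i * (1 / (w - p i))))"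
    by (rule contour_integral_eq) (rule eq)
  also have "\<dots> = contour_integral g \<phi> - (\<Sum>i\<in>I. c i * contour_integral g (\<lambda>w. 1 / (w - p i)))"
    by (rule contour_integral_unique, rule has_contour_integral_diff[OF h1 h3])
  finally show ?thesis .
qed

lemma annulus_residues:
  fixes \<phi> :: "complex \<Rightarrow> complex" and p :: "'i \<Rightarrow> complex" and H :: "'i \<Rightarrow> complex \<Rightarrow> complex"
  assumes U: "open U" and I: "finite I" and inj: "inj_on p I" and pU: "p ` I \<subseteq> U"
    and holo: "\<phi> holomorphic_on (U - p ` I)"
    and loc: "\<And>i. i \<in> I \<Longrightarrow> \<exists>e>0. ball (p i) e \<subseteq> U \<and> H i holomorphic_on ball (p i) e \<and>
                 (\<forall>w\<in>ball (p i) e. w \<noteq> p i \<longrightarrow> \<phi> w = H i w / (w - p i))"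
    and hom: "homotopic_loops U g1 g2" and v1: "valid_path g1" and v2: "valid_path g2"
    and av1: "path_image g1 \<inter> p ` I = {}" and av2: "path_image g2 \<inter> p ` I = {}"
  shows "contour_integral g1 \<phi> - (\<Sum>i\<in>I. H i (p i) * contour_integral g1 (\<lambda>w. 1 / (w - p i)))
       = contour_integral g2 \<phi> - (\<Sum>i\<in>I. H i (p i) * contour_integral g2 (\<lambda>w. 1 / (w - p i)))"
proof -
  define P where "P = p ` I"
  have finP: "finite P" using I by (simp add: P_def)
  define G where "G = (\<lambda>w. \<phi> w - (\<Sum>i\<in>I. H i (p i) * (1 / (w - p i))))"
  define Gt where "Gt = (\<lambda>w. if w \<in> P then deriv (H (the_inv_into I p w)) w
        - (\<Sum>j\<in>I - {the_inv_into I p w}. H j (p j) * (1 / (w - p j))) else G w)"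
  have holG: "G holomorphic_on U - P"
    unfolding G_def P_def by (intro holomorphic_intros holo) auto
  have hol1: "Gt holomorphic_on U - P"
    by (rule holomorphic_transform[OF holG]) (simp add: Gt_def)
  have cont: "(Gt \<longlongrightarrow> Gt z) (at z within U)" if zP: "z \<in> P" for z
  proof -
    obtain i where i: "i \<in> I" "z = p i" using zP P_def by blast
    have zU: "z \<in> U" using pU i by auto
    from loc[OF i(1)] obtain e where e: "e > 0" "ball (p i) e \<subseteq> U" "H i holomorphic_on ball (p i) e"
      "\<forall>w\<in>ball (p i) e. w \<noteq> p i \<longrightarrow> \<phi> w = H i w / (w - p i)" by blast
    obtain e2 where e2: "e2 > 0" "\<forall>w\<in>ball z e2. w \<in> U \<and> (w \<noteq> z \<longrightarrow> w \<notin> P)"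
      using finite_ball_avoid[OF U finP zU] by blast
    define Q where "Q = (\<lambda>w. if w = z then deriv (H i) z else (H i w - H i z) / (w - z))"
    have "Q holomorphic_on ball (p i) e"
      unfolding Q_def using pole_lemma[OF e(3), of z] i e(1) by simp
    then have cQ: "isCont Q z"
      using e(1) i(2) by (metis centre_in_ball continuous_on_interior holomorphic_on_imp_continuous_on interior_ball)
    define K where "K = (\<lambda>w. Q w - (\<Sum>j\<in>I - {i}. H j (p j) * (1 / (w - p j))))"
    have pj: "p j \<noteq> z" if "j \<in> I - {i}" for j
      using inj i that by (auto simp: inj_on_def)
    have cK: "isCont K z"
      unfolding K_def using pj by (intro continuous_intros cQ) auto
    have tiz: "the_inv_into I p z = i" using the_inv_into_f_f[OF inj i(1)] i(2) by simp
    have Kz: "K z = Gt z" unfolding Gt_def K_def Q_def tiz using zP i by simp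
    have ev0: "\<forall>w. w \<noteq> z \<and> dist w z < min e e2 \<longrightarrow> K w = Gt w"
    proof (intro allI impI)
      fix w assume w: "w \<noteq> z \<and> dist w z < min e e2"
      then have wb: "w \<in> ball (p i) e" "w \<in> ball z e2" using i by (auto simp: dist_commute)
      then have wP: "w \<notin> P" using e2 w by auto
      have "\<phi> w = H i w / (w - z)" using e(4) wb(1) w i by auto
      moreover have "(\<Sum>j\<in>I. H j (p j) * (1 / (w - p j)))
          = H i z * (1 / (w - z)) + (\<Sum>j\<in>I - {i}. H j (p j) * (1 / (w - p j)))"
        using sum.remove[OF I i(1)] i(2) by simp
      ultimately show "K w = Gt w"
        unfolding K_def Gt_def G_def Q_def using wP w by (simp add: diff_divide_distrib)
    qed
    have ev: "eventually (\<lambda>w. K w = Gt w) (at z)"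
      unfolding eventually_at using e e2 ev0 by (intro exI[of _ "min e e2"]) auto
    have "(K \<longlongrightarrow> K z) (at z)" using cK by (simp add: isCont_def)
    then have "(Gt \<longlongrightarrow> Gt z) (at z)" using Kz ev by (metis Lim_transform_eventually)
    then show ?thesis by (rule tendsto_within_subset) simp
  qed
  have holGt: "Gt holomorphic_on U"
    by (rule no_isolated_singularity'[OF cont hol1 U finP])
  have eq: "contour_integral g1 Gt = contour_integral g2 Gt"
    by (rule Cauchy_theorem_homotopic_loops[OF hom U holGt v1 v2])
  have sub: "path_image g1 \<subseteq> U" "path_image g2 \<subseteq> U"
    using homotopic_loops_imp_subset[OF hom] by auto
  have d1: "contour_integral g1 Gt = contour_integral g1 \<phi> - (\<Sum>i\<in>I. H i (p i) * contour_integral g1 (\<lambda>w. 1 / (w - p i)))"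
    by (rule ci_decomp[OF v1 U I _ holo]) (use sub av1 in \<open>auto simp: Gt_def G_def P_def\<close>)
  have d2: "contour_integral g2 Gt = contour_integral g2 \<phi> - (\<Sum>i\<in>I. H i (p i) * contour_integral g2 (\<lambda>w. 1 / (w - p i)))"
    by (rule ci_decomp[OF v2 U I _ holo]) (use sub av2 in \<open>auto simp: Gt_def G_def P_def\<close>)
  show ?thesis using eq d1 d2 by simp
qed


lemma downclosed_lessThan:
  fixes A :: "nat set"
  assumes "finite A" "\<And>k j. k \<in> A \<Longrightarrow> j \<le> k \<Longrightarrow> j \<in> A"
  shows "A = {..<card A}"
proof (cases "A = {}")
  case True then show ?thesis by simp
next
  case False
  define m where "m = Max A"
  have "m \<in> A" using Max_in[OF assms(1) False] m_def by simp
  have "A = {..m}"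
  proof
    show "A \<subseteq> {..m}" using Max_ge[OF assms(1)] m_def by auto
    show "{..m} \<subseteq> A" using assms(2) \<open>m \<in> A\<close> by auto
  qed
  then show ?thesis by (simp add: lessThan_Suc_atMost[symmetric])
qed

lemma sum_tail_limit:
  fixes r :: "nat \<Rightarrow> complex" and t c :: real
  assumes t: "0 < t" "t < 1" and c: "c > 0" and sr: "summable r"
  shows "(\<lambda>N. \<Sum>k\<in>{k. c * t ^ N < t ^ k}. r k) \<longlonglongrightarrow> suminf r"
proof -
  define A where "A = (\<lambda>N. {k. c * t ^ N < t ^ k})"
  have tz: "(\<lambda>n. t ^ n) \<longlonglongrightarrow> 0" using t by (intro LIMSEQ_power_zero) simp
  have finA: "finite (A N)" for N
  proof -
    have "c * t ^ N > 0" using t c by simp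
    then have "eventually (\<lambda>n. t ^ n < c * t ^ N) sequentially"
      using order_tendstoD(2)[OF tz] by blast
    then obtain K where K: "\<And>n. n \<ge> K \<Longrightarrow> t ^ n < c * t ^ N"
      unfolding eventually_sequentially by blast
    have "A N \<subseteq> {..<K}"
    proof
      fix k assume "k \<in> A N"
      then have "c * t ^ N < t ^ k" by (simp add: A_def)
      then show "k \<in> {..<K}" using K[of k] by (cases "k \<ge> K") auto
    qed
    then show ?thesis by (rule finite_subset) simp
  qed
  have dc: "j \<in> A N" if "k \<in> A N" "j \<le> k" for k j N
  proof -
    have "t ^ k \<le> t ^ j" using t that(2) by (intro power_decreasing) auto
    then show ?thesis using that(1) by (simp add: A_def)
  qed
  have AN: "A N = {..<card (A N)}" for N
    by (rule downclosed_lessThan[OF finA]) (rule dc)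
  have lim: "filterlim (\<lambda>N. card (A N)) at_top sequentially"
    unfolding filterlim_at_top
  proof
    fix M :: nat
    have "t ^ M / c > 0" using t c by simp
    then have "eventually (\<lambda>N. t ^ N < t ^ M / c) sequentially"
      using order_tendstoD(2)[OF tz] by blast
    then show "eventually (\<lambda>N. M \<le> card (A N)) sequentially"
    proof (rule eventually_mono)
      fix N assume N: "t ^ N < t ^ M / c"
      have "{..<M} \<subseteq> A N"
      proof
        fix k assume "k \<in> {..<M}"
        then have "t ^ M \<le> t ^ k" using t by (intro power_decreasing) auto
        moreover have "c * t ^ N < t ^ M" using N c by (simp add: field_simps)
        ultimately show "k \<in> A N" by (simp add: A_def)
      qed
      then have "card {..<M} \<le> card (A N)" by (rule card_mono[OF finA])
      then show "M \<le> card (A N)" by simp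
    qed
  qed
  have "(\<lambda>N. \<Sum>k<card (A N). r k) \<longlonglongrightarrow> suminf r"
    by (rule filterlim_compose[OF summable_LIMSEQ[OF sr] lim])
  moreover have "(\<lambda>N. \<Sum>k\<in>A N. r k) = (\<lambda>N. \<Sum>k<card (A N). r k)"
  proof
    fix N show "(\<Sum>k\<in>A N. r k) = (\<Sum>k<card (A N). r k)"
      by (rule arg_cong[where f="sum r", OF AN])
  qed
  ultimately have "(\<lambda>N. \<Sum>k\<in>A N. r k) \<longlonglongrightarrow> suminf r" by simp
  then show ?thesis by (simp add: A_def)
qed

lemma integral_periodic_shift:
  fixes G :: "real \<Rightarrow> complex"
  assumes cont: "continuous_on {-pi..2*pi} G" and per: "\<And>t. G (t + 2*pi) = G t"
  shows "integral {-pi..pi} G = integral {0..2*pi} G"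
proof -
  have int: "G integrable_on {a..b}" if "-pi \<le> a" "b \<le> 2*pi" for a b
    by (rule integrable_continuous_real, rule continuous_on_subset[OF cont]) (use that in auto)
  have e1: "integral {-pi..0} G + integral {0..pi} G = integral {-pi..pi} G"
    using Henstock_Kurzweil_Integration.integral_combine[where a="-pi" and c=0 and b=pi and f=G] int[of "-pi" pi] by simp
  have e2: "integral {0..pi} G + integral {pi..2*pi} G = integral {0..2*pi} G"
    using Henstock_Kurzweil_Integration.integral_combine[where a=0 and c=pi and b="2*pi" and f=G] int[of 0 "2*pi"] by simp
  have "G \<circ> (+) (2*pi) = G" by (rule ext) (simp add: per add.commute)
  then have e3: "integral {-pi..0} G = integral {pi..2*pi} G"
    using integral_shift_Icc_real[of "-pi" 0 G "2*pi"] by simp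
  show ?thesis using e1 e2 e3 by (simp add: add.commute)
qed


lemma qpoch_analytic [analytic_intros]:
  assumes q: "norm q < 1" and g: "g analytic_on S"
  shows "(\<lambda>x. qpoch (g x) q) analytic_on S"
proof -
  have "(\<lambda>x. qpoch x q) analytic_on UNIV"
    using qpoch_holo_UNIV[OF q] by (simp add: analytic_on_open)
  then show ?thesis
    using analytic_on_compose_gen[OF g, of "\<lambda>x. qpoch x q" UNIV] by (simp add: o_def)
qed

lemma qpoch_list_analytic [analytic_intros]:
  assumes q: "norm q < 1" and g: "g analytic_on S"
  shows "(\<lambda>x. qpoch_list us (g x) q) analytic_on S"
  unfolding qpoch_list_def
  by (induction us) (auto intro!: analytic_intros q g)

lemma alg1:
  fixes A B C D X X' Y Y' L M :: complex
  assumes "X' \<noteq> 0" "Y' \<noteq> 0"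
  shows "A*B*C*D*L/(X*Y*M) = (A*D*(C*B))/((X*X')*(Y*Y')) * (X'*Y'*L/M)"
proof (cases "X = 0 \<or> Y = 0 \<or> M = 0")
  case True then show ?thesis by auto
next
  case False then show ?thesis using assms by (simp add: field_simps)
qed

lemma alg2:
  fixes a b g d T1 T2 T3 T4 :: complex
  assumes "g \<noteq> 0" "d \<noteq> 0"
  shows "(a*T1)*(b*T2)/((g*T3)*(d*T4)) = (a*b/(g*d)) * (T1*T2/(T3*T4))"
proof (cases "T3 = 0 \<or> T4 = 0")
  case True then show ?thesis by auto
next
  case False then show ?thesis using assms by (simp add: field_simps)
qed

lemma alg3:
  fixes T Z u :: complex
  assumes "u \<noteq> 0"
  shows "T/(u*Z) = (T/Z)/u"
  using assms by simp

locale qsetup =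
  fixes q f d1 d2 :: complex and a c :: "complex list" and R0 R1 :: real
  assumes q: "0 < norm q" "norm q < 1"
   and d: "d1 \<noteq> 0" "d2 \<noteq> 0" and f: "f \<noteq> 0"
   and R0: "norm d1 < R0" "norm d2 < R0"
   and R1: "R0 < R1" "\<forall>ck\<in>set c. norm ck * R1 < 1"
   and hcd: "\<forall>ck \<in> set c. ck * d1 \<notin> Omega_q q \<and> ck * d2 \<notin> Omega_q q"
   and hd21: "d2 / d1 \<notin> qpowers q"
   and hfq: "f \<notin> qpowers q" "f * d1 / d2 \<notin> qpowers q"
begin

lemma q1: "norm q < 1" using q by simp
lemma q0: "q \<noteq> 0" using q by auto
lemma R0pos: "R0 > 0" using R0 by (meson norm_ge_zero le_less_trans)

definition "th x = qtheta x q"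
definition "La w = qpoch_list a w q"
definition "Lc w = qpoch_list c w q"
definition "F w = qpoch (f*d1/w) q * qpoch (q*d2/(f*w)) q * qpoch (f*w/d2) q * qpoch (q*w/(f*d1)) q * La w
                  / (qpoch (d1/w) q * qpoch (d2/w) q * Lc w)"
definition "h w = th (f*d1/w) * th (f*w/d2) / (th (d1/w) * th (d2/w))"
definition "P w = qpoch (q*w/d1) q * qpoch (q*w/d2) q * La w / Lc w"
definition "E1 v = th (f*d1/v) * th (f * v/d2) / ((qpoch (q*d1/v) q * qpoch (q * v/d1) q) * th (d2/v))"
definition "E2 v = th (f*d1/v) * th (f * v/d2) / (th (d1/v) * (qpoch (q*d2/v) q * qpoch (q * v/d2) q))"
definition "dd l = (if l then d1 else d2)"
definition "EE l = (if l then E1 else E2)"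
definition "pt i = dd (fst i) * q ^ snd i"
definition "Hres i w = q ^ snd i * EE (fst i) (w / q ^ snd i) * P w"

lemma F_eq_hP:
  assumes w: "w \<noteq> 0" and n1: "qpoch (q*w/d1) q \<noteq> 0" and n2: "qpoch (q*w/d2) q \<noteq> 0"
  shows "F w = h w * P w"
proof -
  have a1: "q / (f*d1/w) = q*w/(f*d1)" using f d w by (simp add: field_simps)
  have a2: "q / (f*w/d2) = q*d2/(f*w)" using f d w by (simp add: field_simps)
  have a3: "q / (d1/w) = q*w/d1" using d w by (simp add: field_simps)
  have a4: "q / (d2/w) = q*w/d2" using d w by (simp add: field_simps)
  show ?thesis
    unfolding F_def h_def P_def th_def qtheta_def a1 a2 a3 a4
    by (rule alg1[OF n1 n2])
qed

lemma h_mult_q: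
  assumes w: "w \<noteq> 0"
  shows "h (q * w) = q * h w"
proof -
  note qq = q1 q0
  have e1: "th (f*d1/(q*w)) = - ((f*d1/w)/q) * th (f*d1/w)"
    using qtheta_div_q[OF qq, of "f*d1/w"] f d w by (simp add: th_def mult_ac)
  have e2: "th (f*(q*w)/d2) = - (1/(f*w/d2)) * th (f*w/d2)"
    using qtheta_mult_q[OF qq, of "f*w/d2"] f d w by (simp add: th_def mult_ac)
  have e3: "th (d1/(q*w)) = - ((d1/w)/q) * th (d1/w)"
    using qtheta_div_q[OF qq, of "d1/w"] d w by (simp add: th_def mult_ac)
  have e4: "th (d2/(q*w)) = - ((d2/w)/q) * th (d2/w)"
    using qtheta_div_q[OF qq, of "d2/w"] d w by (simp add: th_def mult_ac)
  have "h (q*w) = (- ((f*d1/w)/q) * th (f*d1/w)) * (- (1/(f*w/d2)) * th (f*w/d2))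
        / ((- ((d1/w)/q) * th (d1/w)) * (- ((d2/w)/q) * th (d2/w)))"
    unfolding h_def e1 e2 e3 e4 ..
  also have "\<dots> = ((- ((f*d1/w)/q)) * (- (1/(f*w/d2))) / ((- ((d1/w)/q)) * (- ((d2/w)/q))))
        * (th (f*d1/w) * th (f*w/d2) / (th (d1/w) * th (d2/w)))"
    by (rule alg2) (use d w q0 in auto)
  also have "(- ((f*d1/w)/q)) * (- (1/(f*w/d2))) / ((- ((d1/w)/q)) * (- ((d2/w)/q))) = q"
    using d w q0 f by (simp add: field_simps)
  finally show ?thesis unfolding h_def .
qed

lemma h_pow:
  assumes w: "w \<noteq> 0"
  shows "h (q ^ k * w) = q ^ k * h w"
proof (induction k)
  case 0 then show ?case by simp
next
  case (Suc k)
  have "h (q ^ Suc k * w) = h (q * (q ^ k * w))" by (simp add: mult_ac)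
  also have "\<dots> = q * h (q ^ k * w)" by (rule h_mult_q) (use w q0 in simp)
  finally show ?case using Suc by simp
qed

lemma h_E1:
  assumes v: "v \<noteq> 0" "v \<noteq> d1"
  shows "h v = v * E1 v / (v - d1)"
proof -
  have r: "qpoch (d1/v) q = (1 - d1/v) * qpoch (q*d1/v) q"
    using qpoch_rec[OF q1, of "d1/v"] by simp
  have a: "q/(d1/v) = q * v/d1" using d v by (simp add: field_simps)
  have "th (d1/v) = (1 - d1/v) * (qpoch (q*d1/v) q * qpoch (q * v/d1) q)"
    unfolding th_def qtheta_def r a by (simp only: mult.assoc)
  then have "h v = th (f*d1/v) * th (f * v/d2) / ((1 - d1/v) * ((qpoch (q*d1/v) q * qpoch (q * v/d1) q) * th (d2/v)))"
    unfolding h_def by (simp add: mult_ac)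
  also have "\<dots> = E1 v / (1 - d1/v)"
    unfolding E1_def by (rule alg3) (use v in \<open>auto simp: field_simps\<close>)
  also have "\<dots> = v * E1 v / (v - d1)" using v by (simp add: field_simps)
  finally show ?thesis .
qed

lemma h_E2:
  assumes v: "v \<noteq> 0" "v \<noteq> d2"
  shows "h v = v * E2 v / (v - d2)"
proof -
  have r: "qpoch (d2/v) q = (1 - d2/v) * qpoch (q*d2/v) q"
    using qpoch_rec[OF q1, of "d2/v"] by simp
  have a: "q/(d2/v) = q * v/d2" using d v by (simp add: field_simps)
  have "th (d2/v) = (1 - d2/v) * (qpoch (q*d2/v) q * qpoch (q * v/d2) q)"
    unfolding th_def qtheta_def r a by (simp only: mult.assoc)
  then have "h v = th (f*d1/v) * th (f * v/d2) / ((1 - d2/v) * (th (d1/v) * (qpoch (q*d2/v) q * qpoch (q * v/d2) q)))"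
    unfolding h_def by (simp add: mult_ac)
  also have "\<dots> = E2 v / (1 - d2/v)"
    unfolding E2_def by (rule alg3) (use v in \<open>auto simp: field_simps\<close>)
  also have "\<dots> = v * E2 v / (v - d2)" using v by (simp add: field_simps)
  finally show ?thesis .
qed

lemma h_EE:
  assumes v: "v \<noteq> 0" "v \<noteq> dd l"
  shows "h v = v * EE l v / (v - dd l)"
  using h_E1[OF v(1)] h_E2[OF v(1)] v(2) by (cases l) (auto simp: EE_def dd_def)

lemma dd_nz: "dd l \<noteq> 0" using d by (simp add: dd_def)

lemma F_local:
  assumes w: "w \<noteq> 0" "w \<noteq> pt i" and n1: "qpoch (q*w/d1) q \<noteq> 0" and n2: "qpoch (q*w/d2) q \<noteq> 0"
  shows "F w / w = Hres i w / (w - pt i)"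
proof -
  obtain l k where i: "i = (l, k)" by (cases i)
  define v where "v = w / q ^ k"
  have qk: "q ^ k \<noteq> 0" using q0 by simp
  have wv: "w = q ^ k * v" using qk by (simp add: v_def)
  have v0: "v \<noteq> 0" using w qk by (simp add: v_def)
  have vd: "v \<noteq> dd l" using w(2) qk by (auto simp: v_def pt_def i field_simps)
  have "F w = h w * P w" by (rule F_eq_hP[OF w(1) n1 n2])
  also have "h w = q ^ k * h v" unfolding wv by (rule h_pow[OF v0])
  also have "h v = v * EE l v / (v - dd l)" by (rule h_EE[OF v0 vd])
  finally have "F w / w = q ^ k * (v * EE l v / (v - dd l)) * P w / (q ^ k * v)" using wv by simp
  also have "\<dots> = q ^ k * EE l v * P w / (q ^ k * v - q ^ k * dd l)"
    using qk v0 vd by (simp add: field_simps)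
  also have "\<dots> = Hres i w / (w - pt i)"
    unfolding Hres_def pt_def i v_def using qk by (simp add: mult_ac)
  finally show ?thesis .
qed

end


lemma fin_pow:
  fixes t c :: real
  assumes t: "0 < t" "t < 1" and c: "0 < c"
  shows "finite {k::nat. c < t ^ k}"
proof -
  have tz: "(\<lambda>n. t ^ n) \<longlonglongrightarrow> 0" using t by (intro LIMSEQ_power_zero) simp
  then have "eventually (\<lambda>n. t ^ n < c) sequentially"
    using order_tendstoD(2)[OF tz c] by blast
  then obtain K where K: "\<And>n. n \<ge> K \<Longrightarrow> t ^ n < c"
    unfolding eventually_sequentially by blast
  have "{k. c < t ^ k} \<subseteq> {..<K}"
  proof
    fix k assume "k \<in> {k. c < t ^ k}"
    then show "k \<in> {..<K}" using K[of k] by (cases "k \<ge> K") auto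
  qed
  then show ?thesis by (rule finite_subset) simp
qed

lemma pow_inj:
  fixes t :: real
  assumes t: "0 < t" "t < 1" and e: "t ^ k = t ^ k'"
  shows "k = k'"
proof (rule ccontr)
  assume "k \<noteq> k'"
  then have "k < k' \<or> k' < k" by auto
  then show False using power_strict_decreasing[OF _ t] e by force
qed

context qsetup
begin

lemma qpow_ne_1: "n > 0 \<Longrightarrow> q ^ n \<noteq> 1"
proof
  assume "n > 0" "q ^ n = 1"
  then have "norm q ^ n = 1" by (metis norm_one norm_power)
  moreover have "norm q ^ n < 1" using q \<open>n > 0\<close> by (simp add: power_less_one_iff)
  ultimately show False by simp
qed

lemma ratio_not_qpow: "l \<noteq> l' \<Longrightarrow> dd l / dd l' \<notin> qpowers q"
proof
  assume ll: "l \<noteq> l'" and "dd l / dd l' \<in> qpowers q"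
  then obtain m where m: "dd l / dd l' = q powi m" unfolding qpowers_def by blast
  show False
  proof (cases l)
    case True
    then have "d1 / d2 = q powi m" using ll m by (simp add: dd_def)
    then have "d2 / d1 = q powi (- m)" using d q0 by (simp add: power_int_minus field_simps)
    then show False using hd21 unfolding qpowers_def by blast
  next
    case False
    then have "d2 / d1 = q powi m" using ll m by (simp add: dd_def)
    then show False using hd21 unfolding qpowers_def by blast
  qed
qed

lemma qpoch_ratio_nz: "qpoch (dd l / dd l' * q ^ Suc k) q \<noteq> 0"
proof
  assume "qpoch (dd l / dd l' * q ^ Suc k) q = 0"
  then obtain j where j: "dd l / dd l' * q ^ Suc k * q ^ j = 1"
    using qpoch_eq_0_iff[OF q1] by blast
  then have j': "dd l / dd l' * q ^ (Suc k + j) = 1" by (simp add: power_add mult_ac)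
  show False
  proof (cases "l = l'")
    case True
    then have "q ^ (Suc k + j) = 1" using j' dd_nz by simp
    then show False using qpow_ne_1[of "Suc k + j"] by simp
  next
    case False
    have qn: "q ^ (Suc k + j) \<noteq> 0" using q0 by simp
    have "dd l / dd l' = 1 / q ^ (Suc k + j)" using j' qn by (simp add: eq_divide_eq)
    also have "\<dots> = q powi (- int (Suc k + j))" by (simp only: power_int_minus power_int_of_nat inverse_eq_divide)
    finally have "dd l / dd l' = q powi (- int (Suc k + j))" .
    then show False using ratio_not_qpow[OF False] unfolding qpowers_def by blast
  qed
qed

lemma qpoch_pt_nz: "qpoch (q * pt i / dd l') q \<noteq> 0"
proof -
  obtain l k where i: "i = (l, k)" by (cases i)
  have e: "q * pt i / dd l' = dd l / dd l' * q ^ Suc k" by (simp add: i pt_def mult_ac)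
  show ?thesis unfolding e by (rule qpoch_ratio_nz)
qed

lemma qpoch_pt_nz1: "qpoch (q * pt i / d1) q \<noteq> 0"
  using qpoch_pt_nz[of i True] by (simp add: dd_def)
lemma qpoch_pt_nz2: "qpoch (q * pt i / d2) q \<noteq> 0"
  using qpoch_pt_nz[of i False] by (simp add: dd_def)

lemma Lc_nz: assumes "norm w < R1" shows "Lc w \<noteq> 0"
proof
  assume "Lc w = 0"
  then obtain ck j where ck: "ck \<in> set c" "ck * w * q ^ j = 1"
    unfolding Lc_def using qpoch_list_eq_0_iff[OF q1] by blast
  have "norm (ck * w * q ^ j) = norm ck * norm w * norm q ^ j" by (simp add: norm_mult norm_power)
  also have "\<dots> \<le> norm ck * norm w * 1"
    using q by (intro mult_left_mono power_le_one) auto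
  also have "\<dots> \<le> norm ck * R1" using assms by (simp add: mult_left_mono)
  also have "\<dots> < 1" using R1 ck by auto
  finally show False using ck by simp
qed

lemma norm_pt: "norm (pt i) = norm (dd (fst i)) * norm q ^ snd i"
  by (simp add: pt_def norm_mult norm_power)

lemma norm_pt_less: "norm (pt i) < R0"
proof -
  have "norm (pt i) \<le> norm (dd (fst i)) * 1"
    unfolding norm_pt using q by (intro mult_left_mono power_le_one) auto
  also have "\<dots> < R0" using R0 by (simp add: dd_def)
  finally show ?thesis .
qed

lemma pt_nz: "pt i \<noteq> 0" using q0 dd_nz by (simp add: pt_def)

lemma inj_pt: "inj pt"
proof (rule injI)
  fix i i' assume e: "pt i = pt i'"
  obtain l k where i: "i = (l, k)" by (cases i)
  obtain l' k' where i': "i' = (l', k')" by (cases i')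
  have e': "dd l * q ^ k = dd l' * q ^ k'" using e by (simp add: i i' pt_def)
  show "i = i'"
  proof (cases "l = l'")
    case True
    then have "q ^ k = q ^ k'" using e' dd_nz by simp
    then have "norm q ^ k = norm q ^ k'" by (metis norm_power)
    then have "k = k'" using pow_inj q by blast
    then show ?thesis using True i i' by simp
  next
    case False
    have "dd l / dd l' = q powi (int k' - int k)"
      using e' q0 dd_nz by (simp add: power_int_diff field_simps)
    then show ?thesis using ratio_not_qpow[OF False] unfolding qpowers_def by blast
  qed
qed

lemma qpoch_div_zero: assumes "qpoch (dd l / w) q = 0" shows "\<exists>j. w = pt (l, j)"
proof -
  obtain j where j: "dd l / w * q ^ j = 1" using assms qpoch_eq_0_iff[OF q1] by blast
  then have "w = dd l * q ^ j" by (cases "w = 0") (auto simp: field_simps)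
  then show ?thesis by (auto simp: pt_def)
qed

lemma E_analytic: "EE l analytic_on {dd l}"
proof -
  have qq: "qpoch q q \<noteq> 0" using qpoch_ratio_nz[of l l 0] dd_nz by simp
  have t21: "th (d2/d1) \<noteq> 0" unfolding th_def using qtheta_nz[OF q1 q0 hd21] .
  have t12: "th (d1/d2) \<noteq> 0" unfolding th_def
    using qtheta_nz[OF q1 q0 ratio_not_qpow[of True False]] by (simp add: dd_def)
  show ?thesis
  proof (cases l)
    case True
    have "E1 analytic_on {d1}" unfolding E1_def th_def qtheta_def
      using d f qq t21[unfolded th_def qtheta_def] by (intro analytic_intros q1) auto
    then show ?thesis using True by (simp add: EE_def dd_def)
  next
    case False
    have "E2 analytic_on {d2}" unfolding E2_def th_def qtheta_def
      using d f qq t12[unfolded th_def qtheta_def] by (intro analytic_intros q1) auto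
    then show ?thesis using False by (simp add: EE_def dd_def)
  qed
qed

lemma P_analytic: assumes "norm w < R1" shows "P analytic_on {w}"
  unfolding P_def La_def Lc_def using Lc_nz[OF assms] d unfolding Lc_def
  by (intro analytic_intros q1) auto

lemma Hres_analytic: "Hres i analytic_on {pt i}"
proof -
  obtain l k where i: "i = (l, k)" by (cases i)
  have qk: "q ^ k \<noteq> 0" using q0 by simp
  have "(EE l \<circ> (\<lambda>w. w / q ^ k)) analytic_on {pt i}"
    by (rule analytic_on_compose_gen[OF _ E_analytic]) (use q0 dd_nz in \<open>auto intro!: analytic_intros simp: i pt_def qk\<close>)
  moreover have "norm (pt i) < R1" using norm_pt_less[of i] R1(1) by linarith
  then have "P analytic_on {pt i}" by (rule P_analytic)
  ultimately show ?thesis unfolding Hres_def i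
    by (auto intro!: analytic_intros simp: o_def)
qed

lemma Fw_holo:
  assumes "\<And>w. w \<in> S \<Longrightarrow> w \<noteq> 0 \<and> qpoch (d1/w) q \<noteq> 0 \<and> qpoch (d2/w) q \<noteq> 0 \<and> Lc w \<noteq> 0"
  shows "(\<lambda>w. F w / w) holomorphic_on S"
  unfolding F_def La_def using assms d f unfolding Lc_def
  by (intro holomorphic_intros q1) auto

end


lemma segment_circle_norm:
  fixes r1 r2 :: real
  assumes "0 \<le> r1" "r1 \<le> r2" "x \<in> closed_segment (circlepath 0 r2 t) (circlepath 0 r1 t)"
  shows "r1 \<le> norm x \<and> norm x \<le> r2"
proof -
  define E where "E = exp (2 * of_real pi * \<i> * of_real t)"
  have nE: "norm E = 1" unfolding E_def by (simp add: norm_exp_eq_Re)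
  obtain u where u: "0 \<le> u" "u \<le> 1" "x = (1 - u) *\<^sub>R (r2 * E) + u *\<^sub>R (r1 * E)"
    using assms(3) unfolding in_segment circlepath E_def by auto
  have "x = complex_of_real ((1 - u) * r2 + u * r1) * E"
    using u(3) by (simp add: scaleR_conv_of_real algebra_simps)
  then have "norm x = \<bar>(1 - u) * r2 + u * r1\<bar>" by (simp only: norm_mult nE norm_of_real mult_1_right)
  also have "\<bar>(1 - u) * r2 + u * r1\<bar> = (1 - u) * r2 + u * r1"
    using u assms by (intro abs_of_nonneg add_nonneg_nonneg mult_nonneg_nonneg) auto
  finally have nx: "norm x = (1 - u) * r2 + u * r1" .
  have "(1 - u) * r1 \<le> (1 - u) * r2" using u assms by (intro mult_left_mono) auto
  moreover have "u * r1 \<le> u * r2" using u assms by (intro mult_left_mono) auto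
  ultimately show ?thesis unfolding nx by (auto simp: algebra_simps)
qed

context qsetup
begin

lemma annulus_step:
  assumes rho: "0 < \<rho>" "\<rho> < R0" and avoid: "\<forall>i. norm (pt i) \<noteq> \<rho>"
  shows "contour_integral (circlepath 0 R0) (\<lambda>w. F w / w) - contour_integral (circlepath 0 \<rho>) (\<lambda>w. F w / w)
         = 2 * pi * \<i> * (\<Sum>i\<in>{i. \<rho> < norm (pt i)}. Hres i (pt i))"
proof -
  define U where "U = ball (0::complex) R1 - cball 0 (\<rho>/2)"
  define I where "I = {i. \<rho>/2 < norm (pt i)}"
  define \<phi> where "\<phi> = (\<lambda>w. F w / w)"
  have nd1: "norm d1 > 0" "norm d2 > 0" using d by auto
  have opU: "open U" unfolding U_def by (intro open_Diff) auto
  have memU: "w \<in> U \<longleftrightarrow> \<rho>/2 < norm w \<and> norm w < R1" for w :: complex by (auto simp: U_def)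
  have finI: "finite I"
  proof (rule finite_subset)
    show "I \<subseteq> (UNIV :: bool set) \<times> ({k. \<rho>/2/norm d1 < norm q ^ k} \<union> {k. \<rho>/2/norm d2 < norm q ^ k})"
    proof
      fix i assume "i \<in> I"
      obtain l k where i: "i = (l, k)" by (cases i)
      have "\<rho>/2 < norm (dd l) * norm q ^ k" using \<open>i \<in> I\<close> by (simp add: I_def norm_pt i)
      then show "i \<in> (UNIV :: bool set) \<times> ({k. \<rho>/2/norm d1 < norm q ^ k} \<union> {k. \<rho>/2/norm d2 < norm q ^ k})"
        using nd1 by (cases l) (auto simp: i dd_def field_simps)
    qed
    show "finite ((UNIV :: bool set) \<times> ({k. \<rho>/2/norm d1 < norm q ^ k} \<union> {k. \<rho>/2/norm d2 < norm q ^ k}))"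
      using q rho nd1 by (intro finite_cartesian_product finite_UnI fin_pow) (auto simp: UNIV_bool)
  qed
  have injI: "inj_on pt I" using inj_pt by (rule inj_on_subset) simp
  have ptU: "pt ` I \<subseteq> U"
  proof
    fix w assume "w \<in> pt ` I"
    then obtain i where i: "i \<in> I" "w = pt i" by blast
    have "norm (pt i) < R1" using norm_pt_less[of i] R1(1) by linarith
    then show "w \<in> U" using i by (auto simp: I_def memU)
  qed
  have holo: "\<phi> holomorphic_on (U - pt ` I)"
    unfolding \<phi>_def
  proof (rule Fw_holo)
    fix w assume w: "w \<in> U - pt ` I"
    then have wn: "\<rho>/2 < norm w" "norm w < R1" using memU by auto
    have "qpoch (dd l / w) q \<noteq> 0" for l
    proof
      assume "qpoch (dd l / w) q = 0"
      then obtain j where "w = pt (l, j)" using qpoch_div_zero by blast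
      then show False using w wn by (auto simp: I_def)
    qed
    then show "w \<noteq> 0 \<and> qpoch (d1/w) q \<noteq> 0 \<and> qpoch (d2/w) q \<noteq> 0 \<and> Lc w \<noteq> 0"
      using wn rho Lc_nz[of w] by (auto simp: dd_def split: if_splits) (metis dd_def)+
  qed
  have loc: "\<exists>e>0. ball (pt i) e \<subseteq> U \<and> Hres i holomorphic_on ball (pt i) e \<and>
                 (\<forall>w\<in>ball (pt i) e. w \<noteq> pt i \<longrightarrow> \<phi> w = Hres i w / (w - pt i))" if iI: "i \<in> I" for i
  proof -
    have "pt i \<in> U" using ptU iI by auto
    then obtain e1 where e1: "e1 > 0" "ball (pt i) e1 \<subseteq> U" using opU open_contains_ball by blast
    obtain e2 where e2: "e2 > 0" "Hres i holomorphic_on ball (pt i) e2"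
      using Hres_analytic[of i] unfolding analytic_on_def by blast
    have c1: "isCont (\<lambda>w. qpoch (q * w / d1) q) (pt i)"
      by (rule analytic_at_imp_isCont) (use d in \<open>auto intro!: analytic_intros q1\<close>)
    have c2: "isCont (\<lambda>w. qpoch (q * w / d2) q) (pt i)"
      by (rule analytic_at_imp_isCont) (use d in \<open>auto intro!: analytic_intros q1\<close>)
    obtain e3 where e3: "e3 > 0" "\<forall>y. dist (pt i) y < e3 \<longrightarrow> qpoch (q * y / d1) q \<noteq> 0"
      using continuous_at_avoid[OF c1 qpoch_pt_nz1[of i]] by blast
    obtain e4 where e4: "e4 > 0" "\<forall>y. dist (pt i) y < e4 \<longrightarrow> qpoch (q * y / d2) q \<noteq> 0"
      using continuous_at_avoid[OF c2 qpoch_pt_nz2[of i]] by blast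
    define e5 where "e5 = norm (pt i)"
    have e5: "e5 > 0" using pt_nz by (simp add: e5_def)
    define e where "e = min e1 (min e2 (min e3 (min e4 e5)))"
    have e: "e > 0" using e1 e2 e3 e4 e5 by (simp add: e_def)
    show ?thesis
    proof (intro exI[of _ e] conjI ballI impI)
      show "0 < e" by (rule e)
      show "ball (pt i) e \<subseteq> U" using e1 by (auto simp: e_def)
      show "Hres i holomorphic_on ball (pt i) e"
        by (rule holomorphic_on_subset[OF e2(2)]) (auto simp: e_def)
      fix w assume w: "w \<in> ball (pt i) e" "w \<noteq> pt i"
      then have dw: "dist (pt i) w < e3" "dist (pt i) w < e4" "dist (pt i) w < e5"
        by (auto simp: e_def)
      have w0: "w \<noteq> 0" using dw(3) by (auto simp: e5_def)
      show "\<phi> w = Hres i w / (w - pt i)"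
        unfolding \<phi>_def by (rule F_local) (use w w0 dw e3 e4 in auto)
    qed
  qed
  have hom: "homotopic_loops U (circlepath 0 R0) (circlepath 0 \<rho>)"
  proof (rule homotopic_loops_linear)
    fix t :: real assume "t \<in> {0..1}"
    show "closed_segment (circlepath 0 R0 t) (circlepath 0 \<rho> t) \<subseteq> U"
    proof
      fix x assume "x \<in> closed_segment (circlepath 0 R0 t) (circlepath 0 \<rho> t)"
      then have "\<rho> \<le> norm x \<and> norm x \<le> R0" using segment_circle_norm[of \<rho> R0 x t] rho by auto
      then show "x \<in> U" using rho R1(1) by (auto simp: memU)
    qed
  qed auto
  have av1: "path_image (circlepath 0 R0) \<inter> pt ` I = {}"
  proof -
    have "norm (pt i) \<noteq> R0" for i using norm_pt_less[of i] by simp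
    then show ?thesis using R0pos by auto
  qed
  have av2: "path_image (circlepath 0 \<rho>) \<inter> pt ` I = {}"
    using avoid rho by auto
  have main: "contour_integral (circlepath 0 R0) \<phi> - (\<Sum>i\<in>I. Hres i (pt i) * contour_integral (circlepath 0 R0) (\<lambda>w. 1 / (w - pt i)))
       = contour_integral (circlepath 0 \<rho>) \<phi> - (\<Sum>i\<in>I. Hres i (pt i) * contour_integral (circlepath 0 \<rho>) (\<lambda>w. 1 / (w - pt i)))"
    by (rule annulus_residues[OF opU finI injI ptU holo loc hom]) (use av1 av2 in auto)
  have ci1: "contour_integral (circlepath 0 R0) (\<lambda>w. 1 / (w - pt i)) = 2 * pi * \<i>" for i
  proof -
    have "((\<lambda>u. 1 / (u - pt i)) has_contour_integral (2 * of_real pi * \<i> * 1)) (circlepath 0 R0)"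
      using Cauchy_integral_circlepath_simple[of "\<lambda>_. 1" 0 R0 "pt i"] norm_pt_less[of i] by auto
    then show ?thesis by (simp add: contour_integral_unique)
  qed
  have ci2: "contour_integral (circlepath 0 \<rho>) (\<lambda>w. 1 / (w - pt i)) = (if norm (pt i) < \<rho> then 2 * pi * \<i> else 0)" for i
  proof (cases "norm (pt i) < \<rho>")
    case True
    have "((\<lambda>u. 1 / (u - pt i)) has_contour_integral (2 * of_real pi * \<i> * 1)) (circlepath 0 \<rho>)"
      using Cauchy_integral_circlepath_simple[of "\<lambda>_. 1" 0 \<rho> "pt i"] True by auto
    then show ?thesis using True by (simp add: contour_integral_unique)
  next
    case False
    have "norm (pt i) \<noteq> \<rho>" using avoid by blast
    then have gt: "\<rho> < norm (pt i)" using False by linarith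
    have "((\<lambda>u. 1 / (u - pt i)) has_contour_integral 0) (circlepath 0 \<rho>)"
    proof (rule Cauchy_theorem_disc_simple[of _ 0 "norm (pt i)"])
      show "(\<lambda>u. 1 / (u - pt i)) holomorphic_on ball 0 (norm (pt i))"
        by (intro holomorphic_intros) auto
      show "path_image (circlepath 0 \<rho>) \<subseteq> ball 0 (norm (pt i))" using gt rho by auto
    qed auto
    then show ?thesis using False by (simp add: contour_integral_unique)
  qed
  have "contour_integral (circlepath 0 R0) \<phi> - contour_integral (circlepath 0 \<rho>) \<phi>
      = (\<Sum>i\<in>I. Hres i (pt i) * contour_integral (circlepath 0 R0) (\<lambda>w. 1 / (w - pt i)))
        - (\<Sum>i\<in>I. Hres i (pt i) * contour_integral (circlepath 0 \<rho>) (\<lambda>w. 1 / (w - pt i)))"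
    using main by (simp add: algebra_simps)
  also have "\<dots> = (\<Sum>i\<in>I. if \<rho> < norm (pt i) then 2 * pi * \<i> * Hres i (pt i) else 0)"
    unfolding sum_subtractf[symmetric]
  proof (rule sum.cong[OF refl])
    fix i assume "i \<in> I"
    show "Hres i (pt i) * contour_integral (circlepath 0 R0) (\<lambda>w. 1 / (w - pt i)) -
          Hres i (pt i) * contour_integral (circlepath 0 \<rho>) (\<lambda>w. 1 / (w - pt i)) =
          (if \<rho> < norm (pt i) then 2 * pi * \<i> * Hres i (pt i) else 0)"
      unfolding ci1 ci2 using avoid[rule_format, of i] by (auto simp: algebra_simps)
  qed
  also have "\<dots> = (\<Sum>i\<in>{i\<in>I. \<rho> < norm (pt i)}. 2 * pi * \<i> * Hres i (pt i))"
    by (rule sum.inter_filter[OF finI, symmetric])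
  also have "{i\<in>I. \<rho> < norm (pt i)} = {i. \<rho> < norm (pt i)}"
    using rho by (auto simp: I_def)
  finally show ?thesis unfolding \<phi>_def by (simp add: sum_distrib_left)
qed

end


context qsetup
begin

lemma P_holo: "P holomorphic_on ball 0 R1"
  unfolding P_def La_def using Lc_nz d unfolding Lc_def
  by (intro holomorphic_intros q1) auto

lemma P_bounded:
  assumes "r < R1"
  shows "\<exists>B>0. \<forall>w. norm w \<le> r \<longrightarrow> norm (P w) \<le> B"
proof -
  have "continuous_on (cball 0 r) P"
    by (rule holomorphic_on_imp_continuous_on, rule holomorphic_on_subset[OF P_holo]) (use assms in auto)
  then have "compact (P ` cball 0 r)" by (rule compact_continuous_image) simp
  then have "bounded (P ` cball 0 r)" by (rule compact_imp_bounded)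
  then obtain B where "B > 0" "\<forall>x\<in>P ` cball 0 r. norm x \<le> B"
    unfolding bounded_pos by blast
  then show ?thesis by auto
qed

lemma Hres_pt: "Hres (l, k) (pt (l, k)) = q ^ k * EE l (dd l) * P (pt (l, k))"
  using q0 by (simp add: Hres_def pt_def)

lemma Hres_summable: "summable (\<lambda>k. Hres (l, k) (pt (l, k)))"
proof -
  have "norm (dd l) < R1" using R0 R1 by (auto simp: dd_def)
  then obtain B where B: "B > 0" "\<forall>w. norm w \<le> norm (dd l) \<longrightarrow> norm (P w) \<le> B"
    using P_bounded by blast
  have bnd: "norm (Hres (l, k) (pt (l, k))) \<le> (norm (EE l (dd l)) * B) * norm q ^ k" for k
  proof -
    have "norm q ^ k \<le> 1" using q by (intro power_le_one) auto
    then have "norm (dd l) * norm q ^ k \<le> norm (dd l) * 1" by (intro mult_left_mono) auto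
    then have "norm (pt (l, k)) \<le> norm (dd l) * 1" by (simp add: norm_pt)
    then have Pb: "norm (P (pt (l, k))) \<le> B" using B by simp
    have "norm (Hres (l, k) (pt (l, k))) = (norm (EE l (dd l)) * norm q ^ k) * norm (P (pt (l, k)))"
      by (simp add: Hres_pt norm_mult norm_power mult_ac)
    also have "\<dots> \<le> (norm (EE l (dd l)) * norm q ^ k) * B" by (rule mult_left_mono[OF Pb]) simp
    finally show ?thesis by (simp add: mult_ac)
  qed
  have sg: "summable (\<lambda>k. (norm (EE l (dd l)) * B) * norm q ^ k)"
    using q by (intro summable_mult summable_geometric) auto
  show ?thesis by (rule summable_comparison_test'[OF sg bnd])
qed

definition "S l = (\<Sum>k. Hres (l, k) (pt (l, k)))"

lemma main_contour:
  assumes r0: "0 < \<rho>0" "\<rho>0 < R0" and good: "\<forall>(m::int) l. \<rho>0 \<noteq> norm (dd l) * norm q powi m"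
  shows "contour_integral (circlepath 0 R0) (\<lambda>w. F w / w) = 2 * pi * \<i> * (S True + S False)"
proof -
  define nq where "nq = norm q"
  have nq: "0 < nq" "nq < 1" using q by (auto simp: nq_def)
  define \<rho> where "\<rho> = (\<lambda>N::nat. nq ^ N * \<rho>0)"
  have rhopos: "0 < \<rho> N" for N using nq r0 by (simp add: \<rho>_def)
  have rholt: "\<rho> N < R0" for N
  proof -
    have "\<rho> N \<le> 1 * \<rho>0" unfolding \<rho>_def using nq r0 by (intro mult_right_mono power_le_one) auto
    then show ?thesis using r0 by simp
  qed
  have goodN: "\<rho> N \<noteq> norm (dd l) * nq powi m" for N l and m :: int
  proof
    assume e: "\<rho> N = norm (dd l) * nq powi m"
    have nqN: "nq ^ N \<noteq> 0" using nq by simp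
    have "\<rho>0 = (norm (dd l) * nq powi m) / nq ^ N"
      using e nqN unfolding \<rho>_def by (simp add: eq_divide_eq mult.commute)
    also have "\<dots> = norm (dd l) * nq powi (m - int N)"
      using nq by (simp add: power_int_diff)
    finally have "\<rho>0 = norm (dd l) * nq powi (m - int N)" .
    then show False using good nq_def by blast
  qed
  have avoid: "\<forall>i. norm (pt i) \<noteq> \<rho> N" for N
  proof
    fix i :: "bool \<times> nat"
    obtain l k where i: "i = (l, k)" by (cases i)
    show "norm (pt i) \<noteq> \<rho> N"
      using goodN[of N l "int k"] by (simp add: i norm_pt nq_def)
  qed
  define A where "A = (\<lambda>l N. {k. \<rho> N < norm (dd l) * nq ^ k})"
  have setsplit: "{i. \<rho> N < norm (pt i)} = Pair True ` A True N \<union> Pair False ` A False N" for N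
  proof
    show "{i. \<rho> N < norm (pt i)} \<subseteq> Pair True ` A True N \<union> Pair False ` A False N"
    proof
      fix i assume "i \<in> {i. \<rho> N < norm (pt i)}"
      moreover obtain l k where "i = (l, k)" by (cases i)
      ultimately show "i \<in> Pair True ` A True N \<union> Pair False ` A False N"
        by (cases l) (auto simp: A_def norm_pt nq_def)
    qed
  qed (auto simp: A_def norm_pt nq_def)
  have sumsplit: "(\<Sum>i\<in>{i. \<rho> N < norm (pt i)}. Hres i (pt i))
      = (\<Sum>k\<in>A True N. Hres (True, k) (pt (True, k))) + (\<Sum>k\<in>A False N. Hres (False, k) (pt (False, k)))" for N
  proof -
    have finA: "finite (A l N)" for l
    proof -
      have "A l N = {k. \<rho> N / norm (dd l) < nq ^ k}"
        using dd_nz[of l] by (auto simp: A_def field_simps)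
      then show ?thesis using fin_pow[OF nq, of "\<rho> N / norm (dd l)"] rhopos dd_nz[of l] by simp
    qed
    have "(\<Sum>i\<in>Pair True ` A True N \<union> Pair False ` A False N. Hres i (pt i))
       = (\<Sum>i\<in>Pair True ` A True N. Hres i (pt i)) + (\<Sum>i\<in>Pair False ` A False N. Hres i (pt i))"
      by (rule sum.union_disjoint) (use finA in auto)
    also have "(\<Sum>i\<in>Pair True ` A True N. Hres i (pt i)) = (\<Sum>k\<in>A True N. Hres (True, k) (pt (True, k)))"
      by (subst sum.reindex) (auto simp: inj_on_def)
    also have "(\<Sum>i\<in>Pair False ` A False N. Hres i (pt i)) = (\<Sum>k\<in>A False N. Hres (False, k) (pt (False, k)))"
      by (subst sum.reindex) (auto simp: inj_on_def)
    finally show ?thesis unfolding setsplit .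
  qed
  have lim_sum: "(\<lambda>N. \<Sum>k\<in>A l N. Hres (l, k) (pt (l, k))) \<longlonglongrightarrow> S l" for l
  proof -
    have "A l N = {k. (\<rho>0 / norm (dd l)) * nq ^ N < nq ^ k}" for N
      using dd_nz[of l] by (auto simp: A_def \<rho>_def field_simps)
    then have "(\<lambda>N. \<Sum>k\<in>A l N. Hres (l, k) (pt (l, k))) = (\<lambda>N. \<Sum>k\<in>{k. (\<rho>0 / norm (dd l)) * nq ^ N < nq ^ k}. Hres (l, k) (pt (l, k)))"
      by simp
    also have "\<dots> \<longlonglongrightarrow> S l" unfolding S_def
      by (rule sum_tail_limit[OF nq _ Hres_summable]) (use r0 dd_nz[of l] in simp)
    finally show ?thesis .
  qed
  define Fw where "Fw = (\<lambda>w. F w / w)"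
  have hcont: "continuous_on (sphere 0 \<rho>0) h"
  proof -
    have nz: "th (dd l / v) \<noteq> 0" if "v \<in> sphere 0 \<rho>0" for v l
    proof
      assume "th (dd l / v) = 0"
      then obtain m where m: "dd l / v = q powi m" using qtheta_eq_0_imp[OF q1 q0] by (auto simp: th_def)
      have "norm v = \<rho>0" using that by simp
      then have "norm (dd l) / \<rho>0 = nq powi m" using m by (metis norm_divide norm_power_int nq_def)
      then have "\<rho>0 = norm (dd l) * nq powi (- m)" using r0 nq by (simp add: power_int_minus field_simps)
      then show False using good nq_def by blast
    qed
    have v0: "v \<noteq> 0" if "v \<in> sphere 0 \<rho>0" for v using that r0 by auto
    have "h holomorphic_on sphere 0 \<rho>0"
      unfolding h_def th_def qtheta_def using nz[of _ True] nz[of _ False] v0 d f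
      unfolding th_def qtheta_def dd_def by (intro holomorphic_intros q1) auto
    then show ?thesis by (rule holomorphic_on_imp_continuous_on)
  qed
  obtain Kh where Kh: "Kh > 0" "\<forall>v\<in>sphere 0 \<rho>0. norm (h v) \<le> Kh"
  proof -
    have "compact (h ` sphere 0 \<rho>0)" by (rule compact_continuous_image[OF hcont]) simp
    then have "bounded (h ` sphere 0 \<rho>0)" by (rule compact_imp_bounded)
    then obtain B where "B > 0" "\<forall>x\<in>h ` sphere 0 \<rho>0. norm x \<le> B"
      unfolding bounded_pos by blast
    then show ?thesis using that by auto
  qed
  have "\<rho>0 < R1" using r0 R1 by linarith
  then obtain KP where KP: "KP > 0" "\<forall>w. norm w \<le> \<rho>0 \<longrightarrow> norm (P w) \<le> KP"
    using P_bounded[of \<rho>0] by blast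
  have bound: "norm (Fw w) \<le> nq ^ N * (Kh * KP) / \<rho> N" if w: "norm w = \<rho> N" for w N
  proof -
    have w0: "w \<noteq> 0" using w rhopos[of N] by auto
    have nzl: "qpoch (q * w / dd l) q \<noteq> 0" for l
    proof
      assume "qpoch (q * w / dd l) q = 0"
      then obtain j where j: "q * w / dd l * q ^ j = 1" using qpoch_eq_0_iff[OF q1] by blast
      then have "w * q ^ Suc j = dd l" using dd_nz[of l] by (simp add: field_simps)
      then have "\<rho> N * nq ^ Suc j = norm (dd l)" using w by (metis norm_mult norm_power nq_def)
      then have "\<rho> N = norm (dd l) / nq ^ Suc j"
        using nq by (simp add: eq_divide_eq del: power_Suc)
      also have "\<dots> = norm (dd l) * nq powi (- int (Suc j))"
        by (simp only: power_int_minus power_int_of_nat divide_inverse)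
      finally have "\<rho> N = norm (dd l) * nq powi (- int (Suc j))" .
      then show False using goodN by blast
    qed
    have "F w = h w * P w" by (rule F_eq_hP[OF w0]) (use nzl[of True] nzl[of False] in \<open>auto simp: dd_def\<close>)
    moreover have "h w = q ^ N * h (w / q ^ N)"
      using h_pow[of "w / q ^ N" N] w0 q0 by simp
    ultimately have Fhp: "F w = q ^ N * h (w / q ^ N) * P w" by simp
    have nv: "norm (w / q ^ N) = \<rho>0" using w nq by (simp add: \<rho>_def norm_divide norm_power nq_def)
    have hv: "norm (h (w / q ^ N)) \<le> Kh" using Kh(2) nv by simp
    have "\<rho> N \<le> 1 * \<rho>0" unfolding \<rho>_def using nq r0 by (intro mult_right_mono power_le_one) auto
    then have pw: "norm (P w) \<le> KP" using KP(2) w by simp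
    have "norm (F w) = nq ^ N * norm (h (w / q ^ N)) * norm (P w)"
      by (simp add: Fhp norm_mult norm_power nq_def)
    also have "\<dots> \<le> nq ^ N * Kh * KP"
      using hv pw nq Kh(1) by (intro mult_mono mult_left_mono) auto
    finally have "norm (F w) \<le> nq ^ N * Kh * KP" .
    then show ?thesis unfolding Fw_def using w rhopos[of N]
      by (simp add: norm_divide divide_right_mono mult_ac)
  qed
  have inner: "(\<lambda>N. contour_integral (circlepath 0 (\<rho> N)) Fw) \<longlonglongrightarrow> 0"
  proof (rule Lim_null_comparison)
    show "eventually (\<lambda>N. norm (contour_integral (circlepath 0 (\<rho> N)) Fw) \<le> 2 * pi * (Kh * KP) * nq ^ N) sequentially"
    proof (rule always_eventually, rule allI)
      fix N
      have cont: "continuous_on (path_image (circlepath 0 (\<rho> N))) Fw"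
      proof (rule holomorphic_on_imp_continuous_on)
        show "Fw holomorphic_on path_image (circlepath 0 (\<rho> N))"
          unfolding Fw_def
        proof (rule Fw_holo)
          fix w assume "w \<in> path_image (circlepath 0 (\<rho> N))"
          then have w: "norm w = \<rho> N" using rhopos[of N] by simp
          have "qpoch (dd l / w) q \<noteq> 0" for l
          proof
            assume "qpoch (dd l / w) q = 0"
            then obtain j where "w = pt (l, j)" using qpoch_div_zero by blast
            then show False using avoid[of N] w by auto
          qed
          moreover have "norm w < R1" using w rholt[of N] R1 by simp
          ultimately show "w \<noteq> 0 \<and> qpoch (d1/w) q \<noteq> 0 \<and> qpoch (d2/w) q \<noteq> 0 \<and> Lc w \<noteq> 0"
            using w rhopos[of N] Lc_nz[of w] by (auto simp: dd_def) (metis dd_def)+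
        qed
      qed
      have "(Fw has_contour_integral contour_integral (circlepath 0 (\<rho> N)) Fw) (circlepath 0 (\<rho> N))"
        by (rule has_contour_integral_integral, rule contour_integrable_continuous_circlepath[OF cont])
      then have "norm (contour_integral (circlepath 0 (\<rho> N)) Fw) \<le> (nq ^ N * (Kh * KP) / \<rho> N) * (2 * pi * \<rho> N)"
        by (rule has_contour_integral_bound_circlepath) (use Kh KP rhopos[of N] nq bound in auto)
      also have "\<dots> = 2 * pi * (Kh * KP) * nq ^ N" using rhopos[of N] by (simp add: field_simps)
      finally show "norm (contour_integral (circlepath 0 (\<rho> N)) Fw) \<le> 2 * pi * (Kh * KP) * nq ^ N" .
    qed
    show "(\<lambda>N. 2 * pi * (Kh * KP) * nq ^ N) \<longlonglongrightarrow> 0"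
      using nq by (intro tendsto_mult_right_zero LIMSEQ_power_zero) auto
  qed
  have eqN: "contour_integral (circlepath 0 R0) Fw
      = contour_integral (circlepath 0 (\<rho> N)) Fw
        + 2 * pi * \<i> * ((\<Sum>k\<in>A True N. Hres (True, k) (pt (True, k))) + (\<Sum>k\<in>A False N. Hres (False, k) (pt (False, k))))" for N
    using annulus_step[OF rhopos rholt avoid, of N] sumsplit[of N] unfolding Fw_def by (simp add: algebra_simps)
  have "(\<lambda>N. contour_integral (circlepath 0 (\<rho> N)) Fw
        + 2 * pi * \<i> * ((\<Sum>k\<in>A True N. Hres (True, k) (pt (True, k))) + (\<Sum>k\<in>A False N. Hres (False, k) (pt (False, k)))))
      \<longlonglongrightarrow> 0 + 2 * pi * \<i> * (S True + S False)"
    by (intro tendsto_intros inner lim_sum)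
  then have "(\<lambda>N. contour_integral (circlepath 0 R0) Fw) \<longlonglongrightarrow> 2 * pi * \<i> * (S True + S False)"
    unfolding eqN[symmetric] by simp
  then show ?thesis unfolding Fw_def using LIMSEQ_const_iff by blast
qed

end


lemma not_int_third: "real_of_int m \<noteq> 1/3" "real_of_int m \<noteq> 2/3"
proof -
  show "real_of_int m \<noteq> 1/3"
  proof
    assume "real_of_int m = 1/3"
    then have "real_of_int (3 * m) = real_of_int 1" by simp
    then have "3 * m = 1" by (simp only: of_int_eq_iff)
    then show False by presburger
  qed
  show "real_of_int m \<noteq> 2/3"
  proof
    assume "real_of_int m = 2/3"
    then have "real_of_int (3 * m) = real_of_int 2" by simp
    then have "3 * m = 2" by (simp only: of_int_eq_iff)
    then show False by presburger
  qed
qed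

lemma good_choice:
  fixes A B t :: real
  assumes t: "0 < t" "t < 1" and A: "0 < A" and B: "0 < B"
  shows "\<exists>x\<in>{1/3, 2/3::real}. \<forall>m::int. A * t powr x \<noteq> A * t powi m \<and> A * t powr x \<noteq> B * t powi m"
proof (rule ccontr)
  assume H: "\<not> ?thesis"
  have pw: "t powi m = t powr real_of_int m" for m :: int
    using powr_real_of_int'[of t m] t by simp
  have t1: "t \<noteq> 1" using t by simp
  have first: "A * t powr x \<noteq> A * t powi m" if "x \<in> {1/3, 2/3}" for x m
  proof
    assume "A * t powr x = A * t powi m"
    then have "t powr x = t powr real_of_int m" using A pw by simp
    then have "x = real_of_int m" using powr_inj[OF t(1) t1] by blast
    then show False using that not_int_third[of m] by auto
  qed
  obtain m1 where m1: "A * t powr (1/3) = B * t powi m1" using H first[of "1/3"] by auto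
  obtain m2 where m2: "A * t powr (2/3) = B * t powi m2" using H first[of "2/3"] by auto
  have "t powr (2/3) = t powr (1/3) * t powr (1/3)" using powr_add[of t "1/3" "1/3"] by simp
  then have "B * t powi m2 = (A * t powr (1/3)) * t powr (1/3)" using m2 by (simp add: mult_ac)
  then have "B * t powi m2 = (B * t powi m1) * t powr (1/3)" using m1 by simp
  then have "t powr real_of_int m2 = t powr real_of_int m1 * t powr (1/3)" using B pw by simp
  also have "\<dots> = t powr (real_of_int m1 + 1/3)" by (simp add: powr_add)
  finally have "real_of_int m2 = real_of_int m1 + 1/3" using powr_inj[OF t(1) t1] by blast
  then have "real_of_int (m2 - m1) = 1/3" by simp
  then show False using not_int_third by blast
qed


context qsetup
begin

lemma qP_summable: "summable (\<lambda>k. q ^ k * P (pt (l, k)))"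
proof -
  have "norm (dd l) < R1" using R0 R1 by (auto simp: dd_def)
  then obtain B where B: "B > 0" "\<forall>w. norm w \<le> norm (dd l) \<longrightarrow> norm (P w) \<le> B"
    using P_bounded by blast
  have bnd: "norm (q ^ k * P (pt (l, k))) \<le> B * norm q ^ k" for k
  proof -
    have "norm q ^ k \<le> 1" using q by (intro power_le_one) auto
    then have "norm (dd l) * norm q ^ k \<le> norm (dd l) * 1" by (intro mult_left_mono) auto
    then have "norm (pt (l, k)) \<le> norm (dd l) * 1" by (simp add: norm_pt)
    then have Pb: "norm (P (pt (l, k))) \<le> B" using B by simp
    have "norm (q ^ k * P (pt (l, k))) = norm q ^ k * norm (P (pt (l, k)))"
      by (simp add: norm_mult norm_power)
    also have "\<dots> \<le> norm q ^ k * B" by (rule mult_left_mono[OF Pb]) simp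
    finally show ?thesis by (simp add: mult_ac)
  qed
  have sg: "summable (\<lambda>k. B * norm q ^ k)"
    using q by (intro summable_mult summable_geometric) auto
  show ?thesis by (rule summable_comparison_test'[OF sg bnd])
qed

lemma S_eq: "S l = EE l (dd l) * (\<Sum>k. q ^ k * P (pt (l, k)))"
proof -
  have "S l = (\<Sum>k. EE l (dd l) * (q ^ k * P (pt (l, k))))"
    unfolding S_def Hres_pt by (simp add: mult_ac)
  also have "\<dots> = EE l (dd l) * (\<Sum>k. q ^ k * P (pt (l, k)))"
    by (rule suminf_mult[OF qP_summable])
  finally show ?thesis .
qed

definition "CC = qtheta f q * qtheta (f*d1/d2) q / (qpoch q q ^ 2 * qtheta (d2/d1) q)"

lemma EE_True: "EE True (dd True) = CC"
  using d by (simp add: EE_def dd_def E1_def CC_def th_def power2_eq_square mult_ac)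

lemma EE_False: "EE False (dd False) = - (d2/d1) * CC"
proof -
  have inv: "th (d1/d2) = - (d1/d2) * th (d2/d1)"
    using qtheta_inverse[OF q1 q0, of "d2/d1"] d by (simp add: th_def)
  have "EE False (dd False) = th (f*d1/d2) * th f / (th (d1/d2) * (qpoch q q * qpoch q q))"
    using d by (simp add: EE_def dd_def E2_def)
  also have "\<dots> = th (f*d1/d2) * th f / ((- (d1/d2)) * (th (d2/d1) * (qpoch q q * qpoch q q)))"
    unfolding inv by (simp add: mult_ac)
  also have "\<dots> = (th (f*d1/d2) * th f / (th (d2/d1) * (qpoch q q * qpoch q q))) / (- (d1/d2))"
    by (rule alg3) (use d in simp)
  also have "\<dots> = - (d2/d1) * CC"
    using d by (simp add: CC_def th_def power2_eq_square mult_ac field_simps)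
  finally show ?thesis .
qed

lemma F_cont_sphere: "continuous_on (sphere 0 R0) F"
proof (rule holomorphic_on_imp_continuous_on)
  have "w \<noteq> 0 \<and> qpoch (d1/w) q \<noteq> 0 \<and> qpoch (d2/w) q \<noteq> 0 \<and> Lc w \<noteq> 0" if w: "w \<in> sphere 0 R0" for w
  proof -
    have nw: "norm w = R0" using w by simp
    have "qpoch (dd l / w) q \<noteq> 0" for l
    proof
      assume "qpoch (dd l / w) q = 0"
      then obtain j where "w = pt (l, j)" using qpoch_div_zero by blast
      then show False using norm_pt_less[of "(l,j)"] nw by simp
    qed
    moreover have "norm w < R1" using nw R1 by simp
    ultimately show ?thesis using nw R0pos Lc_nz[of w] by (auto simp: dd_def) (metis dd_def)+
  qed
  then show "F holomorphic_on sphere 0 R0"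
    unfolding F_def La_def using d f unfolding Lc_def
    by (intro holomorphic_intros q1) auto
qed

lemma LHS_value:
  assumes r0: "0 < \<rho>0" "\<rho>0 < R0" and good: "\<forall>(m::int) l. \<rho>0 \<noteq> norm (dd l) * norm q powi m"
  shows "integral {-pi..pi} (\<lambda>t. F (of_real R0 * cis t)) = 2 * pi * (S True + S False)"
proof -
  define G where "G = (\<lambda>t. F (of_real R0 * cis t))"
  have nz: "complex_of_real R0 * cis t \<noteq> 0" for t using R0pos by simp
  have "contour_integral (circlepath 0 R0) (\<lambda>w. F w / w)
      = integral {0..2*pi} (\<lambda>t. F (0 + R0 * cis t) / (0 + R0 * cis t) * R0 * \<i> * cis t)"
    unfolding circlepath_def by (rule contour_integral_part_circlepath_eq) simp
  also have "\<dots> = integral {0..2*pi} (\<lambda>t. \<i> * G t)"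
    by (rule integral_cong) (use nz in \<open>simp add: G_def field_simps\<close>)
  also have "\<dots> = \<i> * integral {0..2*pi} G" by simp
  finally have c1: "contour_integral (circlepath 0 R0) (\<lambda>w. F w / w) = \<i> * integral {0..2*pi} G" .
  have contG: "continuous_on {-pi..2*pi} G"
  proof -
    have "continuous_on {-pi..2*pi} (\<lambda>t. complex_of_real R0 * exp (\<i> * complex_of_real t))"
      by (intro continuous_intros)
    then have c: "continuous_on {-pi..2*pi} (\<lambda>t. complex_of_real R0 * cis t)"
      by (simp add: cis_conv_exp)
    have "continuous_on {-pi..2*pi} (F \<circ> (\<lambda>t. complex_of_real R0 * cis t))"
      by (rule continuous_on_compose[OF c continuous_on_subset[OF F_cont_sphere]])
         (use R0pos in \<open>auto simp: norm_mult\<close>)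
    then show ?thesis by (simp add: G_def o_def)
  qed
  have per: "G (t + 2*pi) = G t" for t
  proof -
    have m: "cis t * cis (2*pi) = cis (t + 2*pi)" by (rule cis_mult)
    have c2: "cis (2*pi) = 1" by (simp add: complex_eq_iff)
    have "cis (t + 2*pi) = cis t" using m c2 by simp
    then show ?thesis by (simp only: G_def)
  qed
  have "integral {-pi..pi} G = integral {0..2*pi} G" by (rule integral_periodic_shift[OF contG per])
  moreover have "\<i> * integral {0..2*pi} G = 2 * pi * \<i> * (S True + S False)"
    using c1 main_contour[OF r0 good] by simp
  ultimately have "\<i> * integral {-pi..pi} G = \<i> * (2 * pi * (S True + S False))" by (simp add: mult_ac)
  then show ?thesis unfolding G_def by simp
qed

end

theorem corollary2p5:
  fixes q f d1 d2 s r :: complex and \<sigma> :: real and a c :: "complex list"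
  assumes hq: "0 < cmod q" "cmod q < 1"
    and hAC: "a \<noteq> [] \<or> c \<noteq> []"
    and hd: "d1 \<noteq> 0" "d2 \<noteq> 0"
    and h\<sigma>: "\<sigma> > 0"
    and hf: "f \<noteq> 0"
    and hc: "\<forall>ck \<in> set c. cmod ck < \<sigma>"
    and hdb: "cmod d1 < 1 / \<sigma>" "cmod d2 < 1 / \<sigma>"
    and hcd: "\<forall>ck \<in> set c. ck * d1 \<notin> Omega_q q \<and> ck * d2 \<notin> Omega_q q"
    and hd21: "d2 / d1 \<notin> qpowers q"
    and hfq: "f \<notin> qpowers q" "f * d1 / d2 \<notin> qpowers q"
    and hs: "s \<noteq> 0"
    and hr: "r ^ 2 = d1 / d2"
  shows
   "integral {-pi..pi} (\<lambda>\<psi>. let z = exp (\<i> * complex_of_real \<psi>) in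
       (qpoch (f * d1 * \<sigma> / z) q * qpoch (q / f * d2 * \<sigma> / z) q
        * qpoch (f / d2 * z / \<sigma>) q * qpoch (q / (f * d1) * z / \<sigma>) q
        * qpoch_list a (z / \<sigma>) q)
       / (qpoch (d1 * \<sigma> / z) q * qpoch (d2 * \<sigma> / z) q * qpoch_list c (z / \<sigma>) q))
    = 2 * pi * (1 / r) * qtheta f q * qtheta (f * d1 / d2) q
        / ((1 - q) * s * (qpoch q q) ^ 2 * qtheta (d2 / d1) q)
      * jackson_int (\<lambda>u. (qpoch (q * r * u / s) q * qpoch (q * (1 / r) * u / s) q
                           * qpoch_list a (d1 * (1 / r) * u / s) q)
                          / qpoch_list c (d1 * (1 / r) * u / s) q)
          (s * (1 / r)) (s * r) q"
proof -
  have q0: "q \<noteq> 0" using hq by auto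
  have r0: "r \<noteq> 0" using hr hd by auto
  have d1eq: "d1 = r ^ 2 * d2" using hr hd by (simp add: field_simps)
  define m where "m = Max (insert 0 (norm ` set c))"
  have finm: "finite (insert 0 (norm ` set c))" by simp
  have mlt: "m < \<sigma>" unfolding m_def using finm hc h\<sigma> by (subst Max_less_iff) auto
  have m0: "0 \<le> m" unfolding m_def using finm by (intro Max_ge) auto
  have cm: "norm ck \<le> m" if "ck \<in> set c" for ck unfolding m_def using finm that by (intro Max_ge) auto
  define R0 where "R0 = 1 / \<sigma>"
  define R1 where "R1 = 2 / (\<sigma> + m)"
  have R01: "R0 < R1" unfolding R0_def R1_def using h\<sigma> m0 mlt by (simp add: field_simps)
  have cR1: "\<forall>ck\<in>set c. norm ck * R1 < 1"
  proof
    fix ck assume "ck \<in> set c"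
    then have "norm ck * R1 \<le> m * R1" using cm R01 h\<sigma> m0 by (intro mult_right_mono) (auto simp: R1_def)
    also have "m * R1 < 1" unfolding R1_def using h\<sigma> m0 mlt by (simp add: field_simps)
    finally show "norm ck * R1 < 1" .
  qed
  interpret Q: qsetup q f d1 d2 a c R0 R1
    using hq hd hf hdb R01 cR1 hcd hd21 hfq by unfold_locales (auto simp: R0_def)
  have "\<exists>x\<in>{1/3, 2/3::real}. \<forall>m::int. norm d1 * norm q powr x \<noteq> norm d1 * norm q powi m \<and> norm d1 * norm q powr x \<noteq> norm d2 * norm q powi m"
    by (rule good_choice) (use hq hd in auto)
  then obtain x where x: "x \<in> {1/3, 2/3::real}"
    "\<forall>m::int. norm d1 * norm q powr x \<noteq> norm d1 * norm q powi m \<and> norm d1 * norm q powr x \<noteq> norm d2 * norm q powi m"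
    by blast
  define \<rho>0 where "\<rho>0 = norm d1 * norm q powr x"
  have xpos: "x > 0" using x(1) by auto
  have qx: "norm q powr x < 1"
  proof -
    have "norm q powr x = exp (x * ln (norm q))" using hq by (simp add: powr_def)
    moreover have "x * ln (norm q) < 0" using xpos ln_less_zero[OF hq] by (simp add: mult_pos_neg)
    ultimately show ?thesis by simp
  qed
  have rp: "0 < \<rho>0" "\<rho>0 < R0"
  proof -
    show "0 < \<rho>0" using hd hq by (simp add: \<rho>0_def)
    have "\<rho>0 < norm d1 * 1" unfolding \<rho>0_def using qx hd by (intro mult_strict_left_mono) auto
    then show "\<rho>0 < R0" using hdb by (simp add: R0_def)
  qed
  have good: "\<forall>(m::int) l. \<rho>0 \<noteq> norm (Q.dd l) * norm q powi m"
    using x(2) by (auto simp: \<rho>0_def Q.dd_def)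
  have LHS: "integral {-pi..pi} (\<lambda>t. Q.F (of_real R0 * cis t)) = 2 * pi * (Q.S True + Q.S False)"
    by (rule Q.LHS_value[OF rp good])
  have integrand: "(let z = exp (\<i> * complex_of_real \<psi>) in
       (qpoch (f * d1 * \<sigma> / z) q * qpoch (q / f * d2 * \<sigma> / z) q
        * qpoch (f / d2 * z / \<sigma>) q * qpoch (q / (f * d1) * z / \<sigma>) q
        * qpoch_list a (z / \<sigma>) q)
       / (qpoch (d1 * \<sigma> / z) q * qpoch (d2 * \<sigma> / z) q * qpoch_list c (z / \<sigma>) q))
      = Q.F (of_real R0 * cis \<psi>)" for \<psi>
  proof -
    define z where "z = exp (\<i> * complex_of_real \<psi>)"
    define w where "w = z / complex_of_real \<sigma>"
    have z0: "z \<noteq> 0" by (simp add: z_def)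
    have s0: "complex_of_real \<sigma> \<noteq> 0" using h\<sigma> by simp
    have w: "of_real R0 * cis \<psi> = w" by (simp add: w_def z_def R0_def cis_conv_exp field_simps)
    have a1: "f * d1 * \<sigma> / z = f * d1 / w" using z0 s0 by (simp add: w_def field_simps)
    have a2: "q / f * d2 * \<sigma> / z = q * d2 / (f * w)" using z0 s0 hf by (simp add: w_def field_simps)
    have a3: "f / d2 * z / \<sigma> = f * w / d2" using z0 s0 hd by (simp add: w_def field_simps)
    have a4: "q / (f * d1) * z / \<sigma> = q * w / (f * d1)" using z0 s0 hd hf by (simp add: w_def field_simps)
    have a5: "d1 * \<sigma> / z = d1 / w" using z0 s0 by (simp add: w_def field_simps)
    have a6: "d2 * \<sigma> / z = d2 / w" using z0 s0 by (simp add: w_def field_simps)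
    show ?thesis unfolding Let_def z_def[symmetric] w
      unfolding a1 a2 a3 a4 a5 a6 w_def[symmetric] Q.F_def Q.La_def Q.Lc_def ..
  qed
  define g where "g = (\<lambda>u. (qpoch (q * r * u / s) q * qpoch (q * (1 / r) * u / s) q
                           * qpoch_list a (d1 * (1 / r) * u / s) q)
                          / qpoch_list c (d1 * (1 / r) * u / s) q)"
  define T1 where "T1 = (\<Sum>k. q ^ k * Q.P (Q.pt (True, k)))"
  define T2 where "T2 = (\<Sum>k. q ^ k * Q.P (Q.pt (False, k)))"
  have g1: "g (q ^ n * (s * r)) = Q.P (Q.pt (True, n))" for n
  proof -
    have b1: "q * r * (q ^ n * (s * r)) / s = q * (d1 * q ^ n) / d2"
      using hs hd r0 by (simp add: d1eq power2_eq_square field_simps)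
    have b2: "q * (1 / r) * (q ^ n * (s * r)) / s = q * (d1 * q ^ n) / d1"
      using hs hd r0 by (simp add: field_simps)
    have b3: "d1 * (1 / r) * (q ^ n * (s * r)) / s = d1 * q ^ n"
      using hs hd r0 by (simp add: field_simps)
    show ?thesis unfolding g_def b1 b2 b3 Q.P_def Q.La_def Q.Lc_def Q.pt_def Q.dd_def
      by (simp add: mult_ac)
  qed
  have g2: "g (q ^ n * (s * (1 / r))) = Q.P (Q.pt (False, n))" for n
  proof -
    have b1: "q * r * (q ^ n * (s * (1 / r))) / s = q * (d2 * q ^ n) / d2"
      using hs hd r0 by (simp add: field_simps)
    have b2: "q * (1 / r) * (q ^ n * (s * (1 / r))) / s = q * (d2 * q ^ n) / d1"
      using hs hd r0 by (simp add: d1eq power2_eq_square field_simps)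
    have b3: "d1 * (1 / r) * (q ^ n * (s * (1 / r))) / s = d2 * q ^ n"
      using hs hd r0 by (simp add: d1eq power2_eq_square field_simps)
    show ?thesis unfolding g_def b1 b2 b3 Q.P_def Q.La_def Q.Lc_def Q.pt_def Q.dd_def
      by (simp add: mult_ac)
  qed
  have J: "jackson_int g (s * (1 / r)) (s * r) q = (1 - q) * (s * r) * T1 - (1 - q) * (s * (1 / r)) * T2"
    unfolding jackson_int_def T1_def T2_def g1 g2 ..
  have S1: "Q.S True = Q.CC * T1" using Q.S_eq[of True] Q.EE_True by (simp add: T1_def)
  have S2: "Q.S False = - (d2/d1) * Q.CC * T2" using Q.S_eq[of False] Q.EE_False by (simp add: T2_def)
  have q1: "1 - q \<noteq> 0" using hq by auto
  have rr: "1 / r * (1 / r) = d2 / d1" using hr hd r0 by (simp add: power2_eq_square field_simps)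
  have Qp: "qpoch q q \<noteq> 0" using Q.qpoch_ratio_nz[of True True 0] Q.dd_nz[of True] by simp
  have Th: "qtheta (d2 / d1) q \<noteq> 0" by (rule qtheta_nz[OF _ q0 hd21]) (use hq in simp)
  have "2 * pi * (1 / r) * qtheta f q * qtheta (f * d1 / d2) q
        / ((1 - q) * s * (qpoch q q) ^ 2 * qtheta (d2 / d1) q)
      * ((1 - q) * (s * r) * T1 - (1 - q) * (s * (1 / r)) * T2)
      = 2 * pi * (qtheta f q * qtheta (f * d1 / d2) q / ((qpoch q q) ^ 2 * qtheta (d2 / d1) q))
        * (T1 - (1 / r * (1 / r)) * T2)"
    using q1 hs r0 Qp Th by (simp add: field_simps)
  also have "\<dots> = 2 * pi * (Q.CC * T1 - (d2 / d1) * Q.CC * T2)"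
    unfolding rr Q.CC_def using Qp Th hd by (simp add: field_simps)
  finally have RHS: "2 * pi * (1 / r) * qtheta f q * qtheta (f * d1 / d2) q
        / ((1 - q) * s * (qpoch q q) ^ 2 * qtheta (d2 / d1) q)
      * ((1 - q) * (s * r) * T1 - (1 - q) * (s * (1 / r)) * T2)
      = 2 * pi * (Q.CC * T1 - (d2 / d1) * Q.CC * T2)" .
  show ?thesis
    unfolding integrand LHS g_def[symmetric] J RHS S1 S2 by (simp add: algebra_simps)
qed

end
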